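(* Let $\pi$ be a positive differentiable probability density on $\mathbb{R}$ such that $(\log\pi)'$ is bounded in some neighbourhood of $0$, and for $\lambda>0$ let $\pi^{(\lambda)}(x)=\lambda^{-1}\pi(x/\lambda)$. Fix $\sigma>0$ and $x\in\mathbb{R}$. Let $Q^R(x,\cdot)=N(x,\sigma^2)$, let $Q^M_\lambda(x,\cdot)=N\big(x+\frac{\sigma^2}{2}(\log\pi^{(\lambda)})'(x),\sigma^2\big)$, and let $Q^B_\lambda(x,dy)=\frac{2\mu_\sigma(y-x)}{1+e^{-(\log\pi^{(\lambda)})'(x)(y-x)}}dy$ where $\mu_\sigma$ is the $N(0,\sigma^2)$ density. Then both $\|Q^M_\lambda(x,\cdot)-Q^R(x,\cdot)\|_{TV}$ and $\|Q^B_\lambda(x,\cdot)-Q^R(x,\cdot)\|_{TV}$ are at most $\Theta(1/\lambda)$ as $\lambda\uparrow\infty$, i.e. $\limsup_{\lambda\to\infty}\lambda\,\|Q^{M/B}_\lambda(x,\cdot)-Q^R(x,\cdot)\|_{TV}<\infty$.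
   Context: $\|\mu-\nu\|_{TV}=\sup_{A}|\mu(A)-\nu(A)|$. *)

theory Defs
  imports "HOL-Probability.Probability"
begin

definition tv_dist :: "real measure \<Rightarrow> real measure \<Rightarrow> real" where
  "tv_dist M N = (SUP A \<in> sets borel. \<bar>measure M A - measure N A\<bar>)"

definition scaled_density :: "(real \<Rightarrow> real) \<Rightarrow> real \<Rightarrow> real \<Rightarrow> real" where
  "scaled_density p l y = p (y / l) / l"

definition QR :: "real \<Rightarrow> real \<Rightarrow> real measure" where
  "QR \<sigma> x = density lborel (\<lambda>y. ennreal (normal_density x \<sigma> y))"

definition QM :: "(real \<Rightarrow> real) \<Rightarrow> real \<Rightarrow> real \<Rightarrow> real \<Rightarrow> real measure" where
  "QM p l \<sigma> x = density lborel (\<lambda>y. ennreal (normal_density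
      (x + \<sigma>\<^sup>2 / 2 * deriv (\<lambda>t. ln (scaled_density p l t)) x) \<sigma> y))"

definition QB :: "(real \<Rightarrow> real) \<Rightarrow> real \<Rightarrow> real \<Rightarrow> real \<Rightarrow> real measure" where
  "QB p l \<sigma> x = density lborel (\<lambda>y. ennreal (2 * normal_density 0 \<sigma> (y - x) /
      (1 + exp (- deriv (\<lambda>t. ln (scaled_density p l t)) x * (y - x)))))"

end

theory Submission
  imports Defs
begin

lemma measure_density_int:
  fixes f :: "real \<Rightarrow> real"
  assumes f: "integrable lborel f" and nn: "\<And>y. f y \<ge> 0" and A: "A \<in> sets borel"
  shows "measure (density lborel (\<lambda>y. ennreal (f y))) A = (\<integral>y. f y * indicator A y \<partial>lborel)"
proof -
  have [measurable]: "A \<in> sets lborel" using A by simp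
  have fm[measurable]: "f \<in> borel_measurable lborel" using f by auto
  have int: "integrable lborel (\<lambda>y. f y * indicator A y)"
    using f A by (intro integrable_real_mult_indicator) auto
  have "emeasure (density lborel (\<lambda>y. ennreal (f y))) A = (\<integral>\<^sup>+ y. ennreal (f y) * indicator A y \<partial>lborel)"
    using A by (intro emeasure_density) auto
  also have "\<dots> = (\<integral>\<^sup>+ y. ennreal (f y * indicator A y) \<partial>lborel)"
    by (intro nn_integral_cong) (auto split: split_indicator)
  also have "\<dots> = ennreal (\<integral>y. f y * indicator A y \<partial>lborel)"
    using int nn by (subst nn_integral_eq_integral) auto
  finally have "emeasure (density lborel (\<lambda>y. ennreal (f y))) A = ennreal (\<integral>y. f y * indicator A y \<partial>lborel)" .
  then show ?thesis
    using nn by (simp add: measure_def integral_nonneg_AE)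
qed

lemma tv_bound:
  fixes f1 f2 h :: "real \<Rightarrow> real"
  assumes f1: "integrable lborel f1" and f2: "integrable lborel f2" and h: "integrable lborel h"
    and nn1: "\<And>y. f1 y \<ge> 0" and nn2: "\<And>y. f2 y \<ge> 0"
    and le: "\<And>y. \<bar>f1 y - f2 y\<bar> \<le> c * h y"
  shows "tv_dist (density lborel (\<lambda>y. ennreal (f1 y))) (density lborel (\<lambda>y. ennreal (f2 y))) \<le> c * (\<integral>y. h y \<partial>lborel)"
  unfolding tv_dist_def
proof (rule cSUP_least)
  show "sets borel \<noteq> {}" by auto
  fix A :: "real set" assume A: "A \<in> sets borel"
  have [measurable]: "A \<in> sets lborel" using A by simp
  have i1: "integrable lborel (\<lambda>y. f1 y * indicator A y)"
    using f1 A by (intro integrable_real_mult_indicator) auto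
  have i2: "integrable lborel (\<lambda>y. f2 y * indicator A y)"
    using f2 A by (intro integrable_real_mult_indicator) auto
  have "\<bar>measure (density lborel (\<lambda>y. ennreal (f1 y))) A - measure (density lborel (\<lambda>y. ennreal (f2 y))) A\<bar>
     = \<bar>\<integral>y. f1 y * indicator A y - f2 y * indicator A y \<partial>lborel\<bar>"
    using measure_density_int[OF f1 nn1 A] measure_density_int[OF f2 nn2 A] i1 i2 by simp
  also have "\<dots> \<le> (\<integral>y. \<bar>f1 y * indicator A y - f2 y * indicator A y\<bar> \<partial>lborel)"
    by (rule integral_abs_bound)
  also have "\<dots> \<le> (\<integral>y. c * h y \<partial>lborel)"
  proof (rule integral_mono)
    show "integrable lborel (\<lambda>y. \<bar>f1 y * indicator A y - f2 y * indicator A y\<bar>)"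
      using i1 i2 by auto
    show "integrable lborel (\<lambda>y. c * h y)" using h by auto
    fix y show "\<bar>f1 y * indicator A y - f2 y * indicator A y\<bar> \<le> c * h y"
      using le[of y] by (auto split: split_indicator)
  qed
  also have "\<dots> = c * (\<integral>y. h y \<partial>lborel)" by simp
  finally show "\<bar>measure (density lborel (\<lambda>y. ennreal (f1 y))) A - measure (density lborel (\<lambda>y. ennreal (f2 y))) A\<bar> \<le> c * (\<integral>y. h y \<partial>lborel)" .
qed


lemma exp_diff_bound:
  fixes a b M :: real
  assumes "a \<le> M" "b \<le> M"
  shows "\<bar>exp a - exp b\<bar> \<le> \<bar>a - b\<bar> * exp M"
proof -
  have *: "exp v - exp u \<le> (v - u) * exp M" if "u \<le> v" "v \<le> M" for u v :: real
  proof -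
    have "1 + (u - v) \<le> exp (u - v)" by (rule exp_ge_add_one_self)
    then have "exp v - exp u = exp v * (1 - exp (u - v))" by (simp add: algebra_simps exp_diff)
    also have "\<dots> \<le> exp v * (v - u)" using \<open>1 + (u - v) \<le> exp (u - v)\<close> by (intro mult_left_mono) (auto simp: algebra_simps)
    also have "\<dots> \<le> exp M * (v - u)" using that by (intro mult_right_mono) auto
    finally show ?thesis by (simp add: mult.commute)
  qed
  show ?thesis
  proof (cases "a \<le> b")
    case True
    then show ?thesis using *[of a b] assms by (simp add: abs_if)
  next
    case False
    then show ?thesis using *[of b a] assms by (simp add: abs_if)
  qed
qed

lemma barker_ratio: fixes u :: real shows "\<bar>2 / (1 + exp (- u)) - 1\<bar> \<le> \<bar>u\<bar>"
proof -
  have pos: "1 + exp (- u) > 0" by (metis add_pos_pos exp_gt_zero zero_less_one)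
  have eq: "2 / (1 + exp (- u)) - 1 = (1 - exp (- u)) / (1 + exp (- u))"
    using pos by (simp add: field_simps)
  have "\<bar>1 - exp (- u)\<bar> \<le> \<bar>u\<bar> * (1 + exp (- u))"
  proof (cases "u \<ge> 0")
    case True
    have e1: "1 + (- u) \<le> exp (- u)" by (rule exp_ge_add_one_self)
    have e2: "exp (- u) \<le> 1" using True by simp
    have "\<bar>1 - exp (- u)\<bar> = 1 - exp (- u)" using e2 by simp
    also have "\<dots> \<le> u" using e1 by linarith
    also have "\<dots> \<le> \<bar>u\<bar> * (1 + exp (- u))" using True by (simp add: algebra_simps)
    finally show ?thesis .
  next
    case False
    have "1 + u \<le> exp u" by (rule exp_ge_add_one_self)
    then have "exp (- u) * (1 + u) \<le> exp (- u) * exp u" by (intro mult_left_mono) auto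
    then have "exp (- u) + u * exp (- u) \<le> 1" by (simp add: algebra_simps exp_minus_inverse)
    moreover have "exp (- u) \<ge> 1" using False by simp
    ultimately show ?thesis using False by (simp add: algebra_simps)
  qed
  then show ?thesis unfolding eq using pos by (simp add: abs_div divide_le_eq)
qed

lemma deriv_ln_p:
  fixes p :: "real \<Rightarrow> real"
  assumes pos: "\<And>y. p y > 0" and diff: "\<And>y. p differentiable (at y)"
  shows "deriv (\<lambda>t. ln (p t)) y = deriv p y / p y"
proof -
  have d: "(p has_real_derivative deriv p y) (at y)"
    using diff DERIV_deriv_iff_real_differentiable by blast
  have "((\<lambda>t. ln (p t)) has_real_derivative (1 / p y) * deriv p y) (at y)"
    by (rule DERIV_chain2[where f = ln and g = p]) (auto intro!: DERIV_ln_divide d pos)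
  then show ?thesis by (intro DERIV_imp_deriv) simp
qed

lemma deriv_scaled:
  fixes p :: "real \<Rightarrow> real"
  assumes pos: "\<And>y. p y > 0" and diff: "\<And>y. p differentiable (at y)" and l: "l > 0"
  shows "deriv (\<lambda>t. ln (scaled_density p l t)) x = deriv (\<lambda>t. ln (p t)) (x / l) / l"
proof -
  have d: "(p has_real_derivative deriv p (x / l)) (at (x / l))"
    using diff DERIV_deriv_iff_real_differentiable by blast
  have d2: "((\<lambda>t. p (t / l)) has_real_derivative deriv p (x / l) * (1 / l)) (at x)"
    proof -
    have "((\<lambda>t. t / l) has_real_derivative 1 / l) (at x)"
      using l by (auto intro!: derivative_eq_intros)
    from DERIV_chain2[where f = p and g = "\<lambda>t. t / l" and x = x and s = UNIV, OF d this]
    show ?thesis using l by simp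
  qed
  have d3: "((\<lambda>t. p (t / l) / l) has_real_derivative deriv p (x / l) * (1 / l) / l) (at x)"
    using d2 by (rule DERIV_cdivide)
  have "((\<lambda>t. ln (p (t / l) / l)) has_real_derivative (1 / (p (x / l) / l)) * (deriv p (x / l) * (1 / l) / l)) (at x)"
    by (rule DERIV_chain2[where f = ln and g = "\<lambda>t. p (t / l) / l", OF DERIV_ln_divide d3]) (use pos l in simp)
  then have "deriv (\<lambda>t. ln (scaled_density p l t)) x = (1 / (p (x / l) / l)) * (deriv p (x / l) * (1 / l) / l)"
    unfolding scaled_density_def by (intro DERIV_imp_deriv) simp
  also have "\<dots> = deriv p (x / l) / p (x / l) / l" using l pos[of "x/l"] by (simp add: field_simps)
  finally show ?thesis using deriv_ln_p[OF pos diff] by simp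
qed


lemma mala_point:
  fixes m x y \<sigma> :: real
  assumes s: "\<sigma> > 0" and m: "\<bar>m\<bar> \<le> 1"
  shows "\<bar>normal_density (x + m) \<sigma> y - normal_density x \<sigma> y\<bar> \<le>
    \<bar>m\<bar> * (exp (1 / (2 * \<sigma>\<^sup>2)) / (2 * \<sigma>\<^sup>2 * sqrt (2 * pi * \<sigma>\<^sup>2))) *
    ((2 * \<bar>y - x\<bar> + 1) * exp (- (y - x)\<^sup>2 / (4 * \<sigma>\<^sup>2)))"
proof -
  define z where "z = y - x"
  define a where "a = - (z - m)\<^sup>2 / (2 * \<sigma>\<^sup>2)"
  define b where "b = - z\<^sup>2 / (2 * \<sigma>\<^sup>2)"
  define M where "M = - z\<^sup>2 / (4 * \<sigma>\<^sup>2) + 1 / (2 * \<sigma>\<^sup>2)"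
  have s2: "\<sigma>\<^sup>2 > 0" using s by simp
  have "0 \<le> (z - 2 * m)\<^sup>2" by simp
  then have "z\<^sup>2 - 2 * m\<^sup>2 \<le> 2 * (z - m)\<^sup>2" by (simp add: power2_eq_square algebra_simps)
  moreover have "m\<^sup>2 \<le> 1" using m power_mono[of "\<bar>m\<bar>" 1 2] by simp
  ultimately have q: "z\<^sup>2 - 2 \<le> 2 * (z - m)\<^sup>2" by linarith
  have aM: "a \<le> M"
  proof -
    have "(- 2 * (z - m)\<^sup>2) / (4 * \<sigma>\<^sup>2) \<le> (2 - z\<^sup>2) / (4 * \<sigma>\<^sup>2)"
      using q s2 by (intro divide_right_mono) auto
    moreover have "a = (- 2 * (z - m)\<^sup>2) / (4 * \<sigma>\<^sup>2)" unfolding a_def using s2 by (simp add: field_simps)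
    moreover have "M = (2 - z\<^sup>2) / (4 * \<sigma>\<^sup>2)" unfolding M_def using s2 by (simp add: field_simps)
    ultimately show ?thesis by simp
  qed
  have bM: "b \<le> M"
  proof -
    have "(- 2 * z\<^sup>2) / (4 * \<sigma>\<^sup>2) \<le> (2 - z\<^sup>2) / (4 * \<sigma>\<^sup>2)"
      using s2 zero_le_power2[of z] by (intro divide_right_mono) auto
    moreover have "b = (- 2 * z\<^sup>2) / (4 * \<sigma>\<^sup>2)" unfolding b_def using s2 by (simp add: field_simps)
    moreover have "M = (2 - z\<^sup>2) / (4 * \<sigma>\<^sup>2)" unfolding M_def using s2 by (simp add: field_simps)
    ultimately show ?thesis by simp
  qed
  have ab: "\<bar>a - b\<bar> \<le> \<bar>m\<bar> * (2 * \<bar>z\<bar> + 1) / (2 * \<sigma>\<^sup>2)"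
  proof -
    have "a - b = (2 * z * m - m\<^sup>2) / (2 * \<sigma>\<^sup>2)"
      unfolding a_def b_def using s2 by (simp add: power2_eq_square add_divide_distrib[symmetric] diff_divide_distrib[symmetric]) (simp add: algebra_simps)
    then have "\<bar>a - b\<bar> = \<bar>2 * z * m - m\<^sup>2\<bar> / (2 * \<sigma>\<^sup>2)" using s2 by simp
    also have "\<dots> \<le> \<bar>m\<bar> * (2 * \<bar>z\<bar> + 1) / (2 * \<sigma>\<^sup>2)"
    proof (rule divide_right_mono)
      have "\<bar>2 * z * m - m\<^sup>2\<bar> \<le> 2 * \<bar>z\<bar> * \<bar>m\<bar> + \<bar>m\<bar> * \<bar>m\<bar>"
        by (simp add: abs_mult power2_eq_square abs_triangle_ineq4[THEN order_trans])
      also have "\<dots> \<le> 2 * \<bar>z\<bar> * \<bar>m\<bar> + \<bar>m\<bar>" using m mult_left_le[of "\<bar>m\<bar>" "\<bar>m\<bar>"] by simp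
      finally show "\<bar>2 * z * m - m\<^sup>2\<bar> \<le> \<bar>m\<bar> * (2 * \<bar>z\<bar> + 1)" by (simp add: algebra_simps)
    qed (use s2 in simp)
    finally show ?thesis .
  qed
  have "\<bar>exp a - exp b\<bar> \<le> \<bar>a - b\<bar> * exp M" by (rule exp_diff_bound[OF aM bM])
  also have "\<dots> \<le> \<bar>m\<bar> * (2 * \<bar>z\<bar> + 1) / (2 * \<sigma>\<^sup>2) * exp M"
    using ab by (intro mult_right_mono) auto
  also have "exp M = exp (1 / (2 * \<sigma>\<^sup>2)) * exp (- z\<^sup>2 / (4 * \<sigma>\<^sup>2))"
    unfolding M_def by (simp add: exp_add[symmetric])
  finally have E: "\<bar>exp a - exp b\<bar> \<le> \<bar>m\<bar> * (2 * \<bar>z\<bar> + 1) / (2 * \<sigma>\<^sup>2) * (exp (1 / (2 * \<sigma>\<^sup>2)) * exp (- z\<^sup>2 / (4 * \<sigma>\<^sup>2)))" .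
  have nd: "normal_density (x + m) \<sigma> y - normal_density x \<sigma> y = (exp a - exp b) / sqrt (2 * pi * \<sigma>\<^sup>2)"
    unfolding normal_density_def a_def b_def z_def by (simp add: algebra_simps diff_divide_distrib)
  have sp: "sqrt (2 * pi * \<sigma>\<^sup>2) > 0" using s2 by simp
  have "\<bar>normal_density (x + m) \<sigma> y - normal_density x \<sigma> y\<bar> = \<bar>exp a - exp b\<bar> / sqrt (2 * pi * \<sigma>\<^sup>2)"
    unfolding nd using sp by (simp add: abs_div)
  also have "\<dots> \<le> (\<bar>m\<bar> * (2 * \<bar>z\<bar> + 1) / (2 * \<sigma>\<^sup>2) * (exp (1 / (2 * \<sigma>\<^sup>2)) * exp (- z\<^sup>2 / (4 * \<sigma>\<^sup>2)))) / sqrt (2 * pi * \<sigma>\<^sup>2)"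
    using E sp by (intro divide_right_mono) auto
  also have "\<dots> = \<bar>m\<bar> * (exp (1 / (2 * \<sigma>\<^sup>2)) / (2 * \<sigma>\<^sup>2 * sqrt (2 * pi * \<sigma>\<^sup>2))) *
    ((2 * \<bar>y - x\<bar> + 1) * exp (- (y - x)\<^sup>2 / (4 * \<sigma>\<^sup>2)))"
    unfolding z_def by (simp add: field_simps)
  finally show ?thesis .
qed

lemma mala_h_int:
  fixes x \<sigma> :: real assumes s: "\<sigma> > 0"
  shows "integrable lborel (\<lambda>y. (2 * \<bar>y - x\<bar> + 1) * exp (- (y - x)\<^sup>2 / (4 * \<sigma>\<^sup>2)))"
proof -
  define nd where "nd = normal_density x (sqrt 2 * \<sigma>)"
  have sq: "(sqrt 2 * \<sigma>)\<^sup>2 = 2 * \<sigma>\<^sup>2" by (simp add: power_mult_distrib)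
  have ndeq: "nd y = 1 / sqrt (4 * pi * \<sigma>\<^sup>2) * exp (- (y - x)\<^sup>2 / (4 * \<sigma>\<^sup>2))" for y
    unfolding nd_def normal_density_def sq by (simp add: mult.assoc)
  have pp: "sqrt (4 * pi * \<sigma>\<^sup>2) > 0" using s by simp
  have eq: "(2 * \<bar>y - x\<bar> + 1) * exp (- (y - x)\<^sup>2 / (4 * \<sigma>\<^sup>2)) =
     sqrt (4 * pi * \<sigma>\<^sup>2) * (2 * (nd y * \<bar>y - x\<bar> ^ 1) + nd y)" for y
    unfolding ndeq using pp s by (simp add: field_simps)
  have "integrable lborel (\<lambda>y. sqrt (4 * pi * \<sigma>\<^sup>2) * (2 * (nd y * \<bar>y - x\<bar> ^ 1) + nd y))"
  proof -
    have "integrable lborel (\<lambda>y. nd y * \<bar>y - x\<bar> ^ 1)"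
      unfolding nd_def using s by (intro integrable_normal_moment_abs mult_pos_pos) auto
    moreover have "integrable lborel nd" unfolding nd_def using s by (intro integrable_normal_density mult_pos_pos) auto
    ultimately show ?thesis by auto
  qed
  then show ?thesis unfolding eq .
qed


theorem proposition2p2:
  fixes p :: "real \<Rightarrow> real" and \<sigma> x :: real
  assumes pos: "\<And>y. p y > 0"
    and diff: "\<And>y. p differentiable (at y)"
    and int: "integrable lborel p"
    and total: "integral\<^sup>L lborel p = 1"
    and bdd: "\<exists>e>0. \<exists>B. \<forall>y. \<bar>y\<bar> < e \<longrightarrow> \<bar>deriv (\<lambda>t. ln (p t)) y\<bar> \<le> B"
    and sigma: "\<sigma> > 0"
  shows "Limsup at_top (\<lambda>l. ereal (l * tv_dist (QM p l \<sigma> x) (QR \<sigma> x))) < \<infinity> \<and>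
         Limsup at_top (\<lambda>l. ereal (l * tv_dist (QB p l \<sigma> x) (QR \<sigma> x))) < \<infinity>"
proof -
  define L where "L = deriv (\<lambda>t. ln (p t))"
  obtain e B where e: "e > 0" and eB: "\<And>y. \<bar>y\<bar> < e \<Longrightarrow> \<bar>L y\<bar> \<le> B"
    using bdd unfolding L_def by blast
  have B0: "B \<ge> 0" using eB[of 0] e by linarith
  define K1 where "K1 = exp (1 / (2 * \<sigma>\<^sup>2)) / (2 * \<sigma>\<^sup>2 * sqrt (2 * pi * \<sigma>\<^sup>2))"
  define h1 where "h1 = (\<lambda>y. (2 * \<bar>y - x\<bar> + 1) * exp (- (y - x)\<^sup>2 / (4 * \<sigma>\<^sup>2)))"
  define h2 where "h2 = (\<lambda>y. normal_density x \<sigma> y * \<bar>y - x\<bar> ^ 1)"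
  define I1 where "I1 = integral\<^sup>L lborel h1"
  define I2 where "I2 = integral\<^sup>L lborel h2"
  have K1: "K1 \<ge> 0" unfolding K1_def by simp
  have h1i: "integrable lborel h1" unfolding h1_def using sigma by (rule mala_h_int)
  have h2i: "integrable lborel h2" unfolding h2_def using sigma by (intro integrable_normal_moment_abs) auto
  have I1: "I1 \<ge> 0" unfolding I1_def h1_def by (intro integral_nonneg_AE) auto
  have I2: "I2 \<ge> 0" unfolding I2_def h2_def by (intro integral_nonneg_AE) auto
  define N where "N = \<bar>x\<bar> / e + \<sigma>\<^sup>2 * B / 2 + 1"
  have main: "l * tv_dist (QM p l \<sigma> x) (QR \<sigma> x) \<le> \<sigma>\<^sup>2 * B / 2 * K1 * I1 \<and>
              l * tv_dist (QB p l \<sigma> x) (QR \<sigma> x) \<le> B * I2" if lN: "l \<ge> N" for l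
  proof -
    have "\<bar>x\<bar> / e \<ge> 0" using e by simp
    moreover have "\<sigma>\<^sup>2 * B / 2 \<ge> 0" using B0 by simp
    ultimately have l1: "l > \<bar>x\<bar> / e" and l2: "l \<ge> \<sigma>\<^sup>2 * B / 2" and l0: "l > 0"
      using lN unfolding N_def by linarith+
    define g where "g = deriv (\<lambda>t. ln (scaled_density p l t)) x"
    have g: "g = L (x / l) / l" unfolding g_def L_def by (rule deriv_scaled[OF pos diff l0])
    have "\<bar>x\<bar> < e * l" using l1 e by (simp add: field_simps)
    then have "\<bar>x / l\<bar> < e" using l0 by (simp add: abs_div field_simps)
    then have "\<bar>L (x / l)\<bar> \<le> B" by (rule eB)
    then have lg: "l * \<bar>g\<bar> \<le> B" unfolding g using l0 by (simp add: abs_div)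
    define m where "m = \<sigma>\<^sup>2 / 2 * g"
    have lm: "l * \<bar>m\<bar> \<le> \<sigma>\<^sup>2 * B / 2"
    proof -
      have "l * \<bar>m\<bar> = \<sigma>\<^sup>2 / 2 * (l * \<bar>g\<bar>)" unfolding m_def by (simp add: abs_mult)
      also have "\<dots> \<le> \<sigma>\<^sup>2 / 2 * B" using lg by (intro mult_left_mono) auto
      finally show ?thesis by simp
    qed
    have m1: "\<bar>m\<bar> \<le> 1"
    proof (rule ccontr)
      assume "\<not> \<bar>m\<bar> \<le> 1"
      then have "l * 1 < l * \<bar>m\<bar>" using l0 by simp
      then show False using lm l2 by simp
    qed
    have QM: "QM p l \<sigma> x = density lborel (\<lambda>y. ennreal (normal_density (x + m) \<sigma> y))"
      unfolding QM_def m_def g_def ..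
    have tvM: "tv_dist (QM p l \<sigma> x) (QR \<sigma> x) \<le> (\<bar>m\<bar> * K1) * I1"
      unfolding QM QR_def I1_def
    proof (rule tv_bound[OF _ _ h1i normal_density_nonneg normal_density_nonneg])
      show "integrable lborel (normal_density (x + m) \<sigma>)" using sigma by simp
      show "integrable lborel (normal_density x \<sigma>)" using sigma by simp
      fix y show "\<bar>normal_density (x + m) \<sigma> y - normal_density x \<sigma> y\<bar> \<le> \<bar>m\<bar> * K1 * h1 y"
        unfolding K1_def h1_def by (rule mala_point[OF sigma m1])
    qed
    have "l * tv_dist (QM p l \<sigma> x) (QR \<sigma> x) \<le> l * ((\<bar>m\<bar> * K1) * I1)"
      using tvM l0 by (intro mult_left_mono) auto
    also have "\<dots> = (l * \<bar>m\<bar>) * (K1 * I1)" by simp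
    also have "\<dots> \<le> (\<sigma>\<^sup>2 * B / 2) * (K1 * I1)" using lm K1 I1 by (intro mult_right_mono) auto
    finally have M: "l * tv_dist (QM p l \<sigma> x) (QR \<sigma> x) \<le> \<sigma>\<^sup>2 * B / 2 * K1 * I1" by simp
    define fB where "fB = (\<lambda>y. 2 * normal_density 0 \<sigma> (y - x) / (1 + exp (- g * (y - x))))"
    have nd0: "normal_density 0 \<sigma> (y - x) = normal_density x \<sigma> y" for y
      unfolding normal_density_def by simp
    have dpos: "1 + exp (- g * (y - x)) > 0" for y by (metis add_pos_pos exp_gt_zero zero_less_one)
    have fBnn: "fB y \<ge> 0" for y unfolding fB_def using dpos[of y] by simp
    have fBle: "\<bar>fB y - normal_density x \<sigma> y\<bar> \<le> \<bar>g\<bar> * h2 y" for y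
    proof -
      have "fB y - normal_density x \<sigma> y = normal_density x \<sigma> y * (2 / (1 + exp (- (g * (y - x)))) - 1)"
        unfolding fB_def nd0 using dpos[of y] by (simp add: field_simps)
      then have "\<bar>fB y - normal_density x \<sigma> y\<bar> = normal_density x \<sigma> y * \<bar>2 / (1 + exp (- (g * (y - x)))) - 1\<bar>"
        by (simp add: abs_mult)
      also have "\<dots> \<le> normal_density x \<sigma> y * \<bar>g * (y - x)\<bar>"
        by (intro mult_left_mono barker_ratio) auto
      finally show ?thesis unfolding h2_def by (simp add: abs_mult mult_ac)
    qed
    have fBm: "fB \<in> borel_measurable lborel" unfolding fB_def by measurable
    have fBi: "integrable lborel fB"
    proof (rule Bochner_Integration.integrable_bound[OF _ fBm])
      show "integrable lborel (\<lambda>y. 2 * normal_density x \<sigma> y)" using sigma by simp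
      show "AE y in lborel. norm (fB y) \<le> norm (2 * normal_density x \<sigma> y)"
      proof (rule AE_I2)
        fix y
        have "fB y \<le> 2 * normal_density x \<sigma> y"
          unfolding fB_def nd0 using dpos[of y]
          by (simp add: divide_le_eq) (simp add: algebra_simps mult_left_le ordered_comm_semiring_class.comm_mult_left_mono)
        then show "norm (fB y) \<le> norm (2 * normal_density x \<sigma> y)" using fBnn[of y] by simp
      qed
    qed
    have QB: "QB p l \<sigma> x = density lborel (\<lambda>y. ennreal (fB y))"
      unfolding QB_def fB_def g_def ..
    have tvB: "tv_dist (QB p l \<sigma> x) (QR \<sigma> x) \<le> \<bar>g\<bar> * I2"
      unfolding QB QR_def I2_def
      by (rule tv_bound[OF fBi integrable_normal_density[OF sigma] h2i fBnn normal_density_nonneg fBle])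
    have "l * tv_dist (QB p l \<sigma> x) (QR \<sigma> x) \<le> l * (\<bar>g\<bar> * I2)"
      using tvB l0 by (intro mult_left_mono) auto
    also have "\<dots> = (l * \<bar>g\<bar>) * I2" by simp
    also have "\<dots> \<le> B * I2" using lg I2 by (intro mult_right_mono) auto
    finally show ?thesis using M by simp
  qed
  have ev1: "eventually (\<lambda>l. ereal (l * tv_dist (QM p l \<sigma> x) (QR \<sigma> x)) \<le> ereal (\<sigma>\<^sup>2 * B / 2 * K1 * I1)) at_top"
    unfolding eventually_at_top_linorder using main by auto
  have ev2: "eventually (\<lambda>l. ereal (l * tv_dist (QB p l \<sigma> x) (QR \<sigma> x)) \<le> ereal (B * I2)) at_top"
    unfolding eventually_at_top_linorder using main by auto
  have "Limsup at_top (\<lambda>l. ereal (l * tv_dist (QM p l \<sigma> x) (QR \<sigma> x))) \<le> ereal (\<sigma>\<^sup>2 * B / 2 * K1 * I1)"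
    by (rule Limsup_bounded[OF ev1])
  moreover have "Limsup at_top (\<lambda>l. ereal (l * tv_dist (QB p l \<sigma> x) (QR \<sigma> x))) \<le> ereal (B * I2)"
    by (rule Limsup_bounded[OF ev2])
  ultimately show ?thesis using le_less_trans by fastforce
qed

end
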